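(* Let $\mathcal{D}=(\mathcal{P},\mathcal{L})$ be a $(G,2)$-point-transitive linear space with $|\mathcal{P}|\ge4$, where $G\le\mathrm{Aut}(\mathcal{D})$. Let $(\sigma,L)$ be an antiflag of $\mathcal{D}$ such that $\Omega=(\sigma,\mathcal{P}\setminus L)^G$ is a feasible $G$-orbit on the set of flags of the complement $\overline{\mathcal{D}}$. Then either $G_L$ is 2-transitive on $\mathcal{P}\setminus L$, or $G_L\le G_\sigma$ and $|L|(|L|-1)$ divides $|\mathcal{P}|-1$. Moreover, if $L=\{\alpha,\beta\}$, then either $|\mathcal{P}|=4$ and $G=A_4$, or $G_{\alpha,\beta}$ is transitive on $\mathcal{P}\setminus\{\alpha,\beta\}$, or $|\mathcal{P}|$ is odd and $G_{\alpha,\beta}\le G_\sigma$ is $\tfrac12$-transitive on $\mathcal{P}\setminus\{\alpha,\beta,\sigma\}$.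
   Context: All groups are finite. A linear space is an incidence structure of points and lines (lines identified with point sets) in which each line has at least two points and any two points lie on exactly one line; $(G,2)$-point-transitive means $G$ acts as automorphisms, 2-transitively on points. An antiflag is a pair $(\sigma,L)$ with $L$ a line and $\sigma\notin L$. The complement $\overline{\mathcal{D}}$ has point set $\mathcal{P}$ and blocks $\mathcal{P}\setminus L$, $L\in\mathcal{L}$; its flags are pairs (point, block containing it). For a $G$-orbit $\Omega$ on flags and a point $\sigma$, $\Omega(\sigma)$ is the set of flags of $\Omega$ with point-entry $\sigma$; $\Omega$ is feasible if $|\Omega(\sigma)|\ge2$ and, for a flag $(\sigma,M)\in\Omega$, the setwise stabilizer $G_{\sigma,M}$ of $M$ in $G_\sigma$ is transitive on $M\setminus\{\sigma\}$. $G_L$ is the setwise stabilizer of $L$, $G_{\alpha,\beta}=G_\alpha\cap G_\beta$. A group is $\tfrac12$-transitive on a set if all its orbits on that set have the same length. *)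

theory Defs
  imports "HOL-Combinatorics.Combinatorics"
begin

definition linear_space :: "'a set \<Rightarrow> 'a set set \<Rightarrow> bool" where
  "linear_space P Lines \<longleftrightarrow> finite P \<and>
     (\<forall>l\<in>Lines. l \<subseteq> P \<and> card l \<ge> 2) \<and>
     (\<forall>x\<in>P. \<forall>y\<in>P. x \<noteq> y \<longrightarrow> (\<exists>!l. l \<in> Lines \<and> x \<in> l \<and> y \<in> l))"

text \<open>G is a group of automorphisms of (P, Lines), represented by its faithful action
  on the points (automorphisms of a linear space are determined by the point map).\<close>
definition aut_group :: "'a set \<Rightarrow> 'a set set \<Rightarrow> ('a \<Rightarrow> 'a) set \<Rightarrow> bool" where
  "aut_group P Lines G \<longleftrightarrow> id \<in> G \<and>
     (\<forall>g\<in>G. \<forall>h\<in>G. g \<circ> h \<in> G) \<and>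
     (\<forall>g\<in>G. inv g \<in> G) \<and>
     (\<forall>g\<in>G. g permutes P \<and> (\<lambda>l. g ` l) ` Lines = Lines)"

definition point_stab :: "('a \<Rightarrow> 'a) set \<Rightarrow> 'a \<Rightarrow> ('a \<Rightarrow> 'a) set" where
  "point_stab H x = {g\<in>H. g x = x}"

definition set_stab :: "('a \<Rightarrow> 'a) set \<Rightarrow> 'a set \<Rightarrow> ('a \<Rightarrow> 'a) set" where
  "set_stab H S = {g\<in>H. g ` S = S}"

definition transitive_on :: "('a \<Rightarrow> 'a) set \<Rightarrow> 'a set \<Rightarrow> bool" where
  "transitive_on H S \<longleftrightarrow> (\<forall>x\<in>S. \<forall>y\<in>S. \<exists>g\<in>H. g x = y)"

definition two_transitive_on :: "('a \<Rightarrow> 'a) set \<Rightarrow> 'a set \<Rightarrow> bool" where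
  "two_transitive_on H S \<longleftrightarrow>
     (\<forall>x\<in>S. \<forall>y\<in>S. \<forall>u\<in>S. \<forall>v\<in>S. x \<noteq> y \<longrightarrow> u \<noteq> v \<longrightarrow>
        (\<exists>g\<in>H. g x = u \<and> g y = v))"

definition orbit_of :: "('a \<Rightarrow> 'a) set \<Rightarrow> 'a \<Rightarrow> 'a set" where
  "orbit_of H x = (\<lambda>g. g x) ` H"

definition half_transitive_on :: "('a \<Rightarrow> 'a) set \<Rightarrow> 'a set \<Rightarrow> bool" where
  "half_transitive_on H S \<longleftrightarrow>
     (\<forall>x\<in>S. \<forall>y\<in>S. card (orbit_of H x) = card (orbit_of H y))"

text \<open>The G-orbit of the flag (sigma, P - L) of the complement design.\<close>
definition flag_orbit :: "('a \<Rightarrow> 'a) set \<Rightarrow> 'a \<Rightarrow> 'a set \<Rightarrow> ('a \<times> 'a set) set" where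
  "flag_orbit G \<sigma> M = (\<lambda>g. (g \<sigma>, g ` M)) ` G"

definition orbit_at :: "('a \<times> 'a set) set \<Rightarrow> 'a \<Rightarrow> ('a \<times> 'a set) set" where
  "orbit_at \<Omega> \<tau> = {f\<in>\<Omega>. fst f = \<tau>}"

definition feasible :: "'a set \<Rightarrow> ('a \<Rightarrow> 'a) set \<Rightarrow> ('a \<times> 'a set) set \<Rightarrow> bool" where
  "feasible P G \<Omega> \<longleftrightarrow>
     (\<forall>\<tau>\<in>P. card (orbit_at \<Omega> \<tau>) \<ge> 2) \<and>
     (\<forall>(\<tau>, M)\<in>\<Omega>. transitive_on (set_stab (point_stab G \<tau>) M) (M - {\<tau>}))"

end

theory Submission
  imports Defs
begin

lemma aut_perm: "aut_group P Lines G \<Longrightarrow> g \<in> G \<Longrightarrow> g permutes P"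
  by (simp add: aut_group_def)
lemma aut_comp: "aut_group P Lines G \<Longrightarrow> g \<in> G \<Longrightarrow> h \<in> G \<Longrightarrow> g \<circ> h \<in> G"
  by (simp add: aut_group_def)
lemma aut_inv: "aut_group P Lines G \<Longrightarrow> g \<in> G \<Longrightarrow> inv g \<in> G"
  by (simp add: aut_group_def)
lemma aut_id: "aut_group P Lines G \<Longrightarrow> id \<in> G"
  by (simp add: aut_group_def)
lemma aut_line: "aut_group P Lines G \<Longrightarrow> g \<in> G \<Longrightarrow> l \<in> Lines \<Longrightarrow> g ` l \<in> Lines"
  unfolding aut_group_def by blast

lemma lin_sub: "linear_space P Lines \<Longrightarrow> l \<in> Lines \<Longrightarrow> l \<subseteq> P"
  unfolding linear_space_def by (elim conjE) (drule bspec, assumption, elim conjE)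

lemma lin_ex1: "linear_space P Lines \<Longrightarrow> x \<in> P \<Longrightarrow> y \<in> P \<Longrightarrow> x \<noteq> y \<Longrightarrow> \<exists>!l. l \<in> Lines \<and> x \<in> l \<and> y \<in> l"
  unfolding linear_space_def by (elim conjE) (drule bspec, assumption, drule bspec, assumption, erule mp)

lemma line_unique:
  assumes "linear_space P Lines" "l \<in> Lines" "l' \<in> Lines" "x \<in> l" "y \<in> l" "x \<in> l'" "y \<in> l'" "x \<noteq> y"
  shows "l = l'"
proof -
  have "x \<in> P" "y \<in> P" using lin_sub[OF assms(1,2)] assms(4,5) by auto
  then have "\<exists>!l. l \<in> Lines \<and> x \<in> l \<and> y \<in> l" using lin_ex1[OF assms(1)] assms(8) by blast
  then obtain l0 where h: "\<And>m. m \<in> Lines \<and> x \<in> m \<and> y \<in> m \<Longrightarrow> m = l0" by blast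
  have "l = l0" "l' = l0" using h assms(2-7) by auto
  then show ?thesis by simp
qed

lemma perm_diff: "g permutes P \<Longrightarrow> g ` (P - L) = P - g ` L"
proof -
  assume g: "g permutes P"
  have "g ` (P - L) = g ` P - g ` L" by (rule image_set_diff[OF permutes_inj[OF g]])
  then show ?thesis using permutes_image[OF g] by simp
qed

lemma perm_stab_iff: "g permutes P \<Longrightarrow> L \<subseteq> P \<Longrightarrow> g ` (P - L) = P - L \<longleftrightarrow> g ` L = L"
proof -
  assume g: "g permutes P" and L: "L \<subseteq> P"
  have gL: "g ` L \<subseteq> P" using permutes_image[OF g] L by auto
  have e: "g ` (P - L) = P - g ` L" by (rule perm_diff[OF g])
  show ?thesis
  proof
    assume h: "g ` (P - L) = P - L"
    have "g ` L = P - (P - g ` L)" using gL by auto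
    also have "\<dots> = P - (P - L)" using h e by simp
    also have "\<dots> = L" using L by auto
    finally show "g ` L = L" .
  next
    assume "g ` L = L" then show "g ` (P - L) = P - L" using e by simp
  qed
qed

lemma inv_image_stab: "g permutes P \<Longrightarrow> g ` L = L \<Longrightarrow> inv g ` L = L"
proof -
  assume g: "g permutes P" "g ` L = L"
  have "inv g ` (g ` L) = L" by (rule image_inv_f_f[OF permutes_inj[OF g(1)]])
  then show ?thesis using g(2) by simp
qed

lemma perm_of: "finite P \<Longrightarrow> g permutes P \<Longrightarrow> permutation g"
  by (rule permutes_imp_permutation)

lemma three_cycle_even:
  assumes g: "g permutes P" and P: "P = {t,x,y,z}"
    and d: "t \<noteq> x" "t \<noteq> y" "t \<noteq> z" "x \<noteq> y" "x \<noteq> z" "y \<noteq> z"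
    and f: "g t = t" "g x \<noteq> x" "g y \<noteq> y" "g z \<noteq> z"
  shows "evenperm g"
proof -
  have inj: "\<And>a b. g a = g b \<longleftrightarrow> a = b" using permutes_inj[OF g] by (auto dest: injD)
  have m: "g x \<in> P" "g y \<in> P" "g z \<in> P" using permutes_in_image[OF g] P by auto
  have n: "g x \<noteq> t" "g y \<noteq> t" "g z \<noteq> t" using f(1) inj d by metis+
  have nn: "g x \<noteq> g y" "g x \<noteq> g z" "g y \<noteq> g z" using inj d by auto
  have out: "\<And>w. w \<notin> P \<Longrightarrow> g w = w" using permutes_not_in[OF g] by blast
  have c: "(g x = y \<and> g y = z \<and> g z = x) \<or> (g x = z \<and> g z = y \<and> g y = x)"
    using m n nn f(2-4) unfolding P by auto
  then show ?thesis
  proof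
    assume h: "g x = y \<and> g y = z \<and> g z = x"
    have "g = Transposition.transpose x z \<circ> Transposition.transpose x y"
    proof
      fix w show "g w = (Transposition.transpose x z \<circ> Transposition.transpose x y) w"
        using h f(1) out[of w] d unfolding P by (auto simp: Transposition.transpose_def)
    qed
    then show ?thesis using d by (simp add: evenperm_comp permutation_swap_id evenperm_swap)
  next
    assume h: "g x = z \<and> g z = y \<and> g y = x"
    have "g = Transposition.transpose x y \<circ> Transposition.transpose x z"
    proof
      fix w show "g w = (Transposition.transpose x y \<circ> Transposition.transpose x z) w"
        using h f(1) out[of w] d unfolding P by (auto simp: Transposition.transpose_def)
    qed
    then show ?thesis using d by (simp add: evenperm_comp permutation_swap_id evenperm_swap)
  qed
qed

lemma double_even:
  assumes g: "g permutes P" and P: "P = {a,b,c,d}"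
    and d: "a \<noteq> b" "a \<noteq> c" "a \<noteq> d" "b \<noteq> c" "b \<noteq> d" "c \<noteq> d"
    and f: "g a = b" "g b = a" "g c = d" "g d = c"
  shows "evenperm g"
proof -
  have out: "\<And>w. w \<notin> P \<Longrightarrow> g w = w" using permutes_not_in[OF g] by blast
  have "g = Transposition.transpose a b \<circ> Transposition.transpose c d"
  proof
    fix w show "g w = (Transposition.transpose a b \<circ> Transposition.transpose c d) w"
      using f out[of w] d unfolding P by (auto simp: Transposition.transpose_def)
  qed
  then show ?thesis using d by (simp add: evenperm_comp permutation_swap_id evenperm_swap)
qed

lemma rest3: "finite P \<Longrightarrow> card P = 4 \<Longrightarrow> t \<in> P \<Longrightarrow>
   \<exists>x y z. P = {t,x,y,z} \<and> t \<noteq> x \<and> t \<noteq> y \<and> t \<noteq> z \<and> x \<noteq> y \<and> x \<noteq> z \<and> y \<noteq> z"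
proof -
  assume fin: "finite P" and c: "card P = 4" and t: "t \<in> P"
  have "card (P - {t}) = 3" using fin c t by simp
  then obtain x y z where "P - {t} = {x,y,z}" "x \<noteq> y" "y \<noteq> z" "x \<noteq> z" unfolding card_3_iff by blast
  moreover then have "P = {t,x,y,z}" "t \<noteq> x" "t \<noteq> y" "t \<noteq> z" using t by blast+
  ultimately show ?thesis by blast
qed

lemma rest2: "finite P \<Longrightarrow> card P = 4 \<Longrightarrow> a \<in> P \<Longrightarrow> b \<in> P \<Longrightarrow> a \<noteq> b \<Longrightarrow>
   \<exists>c d. P = {a,b,c,d} \<and> a \<noteq> c \<and> a \<noteq> d \<and> b \<noteq> c \<and> b \<noteq> d \<and> c \<noteq> d"
proof -
  assume fin: "finite P" and c: "card P = 4" and a: "a \<in> P" and b: "b \<in> P" and ab: "a \<noteq> b"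
  have "card (P - {a,b}) = 2" using fin c a b ab by (simp add: card_Diff_subset)
  then obtain x y where "P - {a,b} = {x,y}" "x \<noteq> y" unfolding card_2_iff by blast
  moreover then have "P = {a,b,x,y}" "a \<noteq> x" "a \<noteq> y" "b \<noteq> x" "b \<noteq> y" using a b by blast+
  ultimately show ?thesis by blast
qed

lemma A4:
  fixes P :: "'a set" and G :: "('a \<Rightarrow> 'a) set"
  assumes fin: "finite P" and c4: "card P = 4"
    and perm: "\<And>g. g \<in> G \<Longrightarrow> g permutes P"
    and comp: "\<And>g h. g \<in> G \<Longrightarrow> h \<in> G \<Longrightarrow> g \<circ> h \<in> G"
    and invG: "\<And>g. g \<in> G \<Longrightarrow> inv g \<in> G"
    and tt: "\<And>x y u v. x \<in> P \<Longrightarrow> y \<in> P \<Longrightarrow> u \<in> P \<Longrightarrow> v \<in> P \<Longrightarrow> x \<noteq> y \<Longrightarrow> u \<noteq> v \<Longrightarrow> \<exists>g\<in>G. g x = u \<and> g y = v"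
    and sharp: "\<And>g x y. g \<in> G \<Longrightarrow> x \<in> P \<Longrightarrow> y \<in> P \<Longrightarrow> x \<noteq> y \<Longrightarrow> g x = x \<Longrightarrow> g y = y \<Longrightarrow> g = id"
  shows "G = {p. p permutes P \<and> evenperm p}"
proof -
  have fixed_even: "evenperm g" if g: "g \<in> G" and t: "t \<in> P" and gt: "g t = t" for g t
  proof -
    obtain x y z where P: "P = {t,x,y,z}" and d: "t \<noteq> x" "t \<noteq> y" "t \<noteq> z" "x \<noteq> y" "x \<noteq> z" "y \<noteq> z"
      using rest3[OF fin c4 t] by blast
    have xyz: "x \<in> P" "y \<in> P" "z \<in> P" using P by auto
    show ?thesis
    proof (cases "g x = x \<or> g y = y \<or> g z = z")
      case True
      then have "g = id" using sharp[OF g t] xyz d gt by metis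
      then show ?thesis by simp
    next
      case False
      then show ?thesis using three_cycle_even[OF perm[OF g] P d gt] by blast
    qed
  qed
  have all_even: "evenperm g" if g: "g \<in> G" for g
  proof -
    obtain a where a: "a \<in> P" using c4 by (metis card.empty ex_in_conv zero_neq_numeral)
    show ?thesis
    proof (cases "g a = a")
      case True then show ?thesis using fixed_even[OF g a] by simp
    next
      case False
      define x where "x = g a"
      have x: "x \<in> P" "a \<noteq> x" unfolding x_def using permutes_in_image[OF perm[OF g]] a False by auto
      obtain y z where P: "P = {a,x,y,z}" and d: "a \<noteq> y" "a \<noteq> z" "x \<noteq> y" "x \<noteq> z" "y \<noteq> z"
        using rest2[OF fin c4 a x(1) x(2)] by blast
      obtain k where k: "k \<in> G" "k a = x" "k x = a" using tt[OF a x(1) x(1) a x(2)] x(2) by metis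
      have kinj: "\<And>u v. k u = k v \<longleftrightarrow> u = v" using permutes_inj[OF perm[OF k(1)]] by (auto dest: injD)
      have km: "k y \<in> P" "k z \<in> P" using permutes_in_image[OF perm[OF k(1)]] P by auto
      have ky: "k y \<noteq> y"
      proof
        assume h: "k y = y"
        have "k z \<noteq> x" "k z \<noteq> a" "k z \<noteq> y" using k h kinj d by metis+
        then have "k z = z" using km P by blast
        then have "k = id" using sharp[OF k(1)] h d P by auto
        then show False using k x(2) by simp
      qed
      have "k y \<noteq> x" "k y \<noteq> a" using k kinj d by metis+
      then have kyz: "k y = z" using km P ky by blast
      have "k z \<noteq> x" "k z \<noteq> a" "k z \<noteq> z" using k kyz kinj d by metis+
      then have kzy: "k z = y" using km P by blast
      have ke: "evenperm k"
        by (rule double_even[OF perm[OF k(1)] P x(2) d(1,2) d(3,4,5) k(2,3) kyz kzy])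
      have "k \<circ> g \<in> G" using comp k(1) g by simp
      moreover have "(k \<circ> g) a = a" using k unfolding x_def by simp
      ultimately have "evenperm (k \<circ> g)" using fixed_even a by blast
      then show ?thesis using ke evenperm_comp[OF perm_of[OF fin perm[OF k(1)]] perm_of[OF fin perm[OF g]]] by simp
    qed
  qed
  show ?thesis
  proof
    show "G \<subseteq> {p. p permutes P \<and> evenperm p}" using perm all_even by blast
    show "{p. p permutes P \<and> evenperm p} \<subseteq> G"
    proof
      fix p assume "p \<in> {p. p permutes P \<and> evenperm p}"
      then have p: "p permutes P" "evenperm p" by auto
      obtain a b where ab: "a \<in> P" "b \<in> P" "a \<noteq> b"
      proof -
        obtain a where a: "a \<in> P" using c4 by (metis card.empty ex_in_conv zero_neq_numeral)
        obtain x y z where "P = {a,x,y,z}" "a \<noteq> x" using rest3[OF fin c4 a] by blast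
        then show ?thesis using that a by blast
      qed
      have pab: "p a \<in> P" "p b \<in> P" "p a \<noteq> p b" using permutes_in_image[OF p(1)] permutes_inj[OF p(1)] ab
        by (auto dest: injD)
      obtain g where g: "g \<in> G" "g a = p a" "g b = p b" using tt[OF ab(1,2) pab(1,2) ab(3) pab(3)] by blast
      define q where "q = inv g \<circ> p"
      have gp: "g permutes P" using perm[OF g(1)] .
      have q: "q permutes P" unfolding q_def by (rule permutes_compose[OF p(1) permutes_inv[OF gp]])
      have qa: "q a = a" "q b = b" unfolding q_def using g permutes_inverses(2)[OF gp] by (metis comp_apply)+
      have "evenperm (inv g)" using evenperm_inv[OF perm_of[OF fin gp]] all_even[OF g(1)] by simp
      then have qe: "evenperm q" unfolding q_def
        using evenperm_comp[OF perm_of[OF fin permutes_inv[OF gp]] perm_of[OF fin p(1)]] p(2) by simp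
      obtain c d where P: "P = {a,b,c,d}" and d: "a \<noteq> c" "a \<noteq> d" "b \<noteq> c" "b \<noteq> d" "c \<noteq> d"
        using rest2[OF fin c4 ab] by blast
      have qinj: "\<And>u v. q u = q v \<longleftrightarrow> u = v" using permutes_inj[OF q] by (auto dest: injD)
      have qm: "q c \<in> P" "q d \<in> P" using permutes_in_image[OF q] P by auto
      have "q c \<noteq> a" "q c \<noteq> b" "q d \<noteq> a" "q d \<noteq> b" using qa qinj d by metis+
      then have qc: "(q c = c \<and> q d = d) \<or> (q c = d \<and> q d = c)" using qm qinj d P by auto
      have out: "\<And>w. w \<notin> P \<Longrightarrow> q w = w" using permutes_not_in[OF q] by blast
      have "q = id"
      proof (cases "q c = c")
        case True
        then have "q d = d" using qc d by auto
        show ?thesis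
        proof
          fix w show "q w = id w" using True \<open>q d = d\<close> qa out[of w] unfolding P by (cases "w \<in> {a,b,c,d}") auto
        qed
      next
        case False
        then have h: "q c = d" "q d = c" using qc by auto
        have "q = Transposition.transpose c d"
        proof
          fix w show "q w = Transposition.transpose c d w"
            using h qa out[of w] d ab(3) unfolding P by (auto simp: Transposition.transpose_def)
        qed
        then show ?thesis using qe d by (simp add: evenperm_swap)
      qed
      then have "\<And>w. inv g (p w) = w" unfolding q_def by (metis comp_apply id_apply)
      then have "\<And>w. p w = g w" using permutes_inverses(1)[OF gp] by metis
      then have "p = g" by (intro ext) simp
      then show "p \<in> G" using g(1) by simp
    qed
  qed
qed


lemma three_in: "finite S \<Longrightarrow> card S \<ge> 3 \<Longrightarrow> \<exists>x y z. x \<in> S \<and> y \<in> S \<and> z \<in> S \<and> x \<noteq> y \<and> x \<noteq> z \<and> y \<noteq> z"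
proof -
  assume "finite S" "card S \<ge> 3"
  then obtain T where "T \<subseteq> S" "card T = 3" using obtain_subset_with_card_n by metis
  then show ?thesis unfolding card_3_iff by blast
qed

locale ctx =
  fixes P :: "'a set" and Lines :: "'a set set" and G :: "('a \<Rightarrow> 'a) set"
    and \<sigma> :: 'a and L :: "'a set"
  assumes lin: "linear_space P Lines"
    and aut: "aut_group P Lines G"
    and tt: "two_transitive_on G P"
    and four: "card P \<ge> 4"
    and Lline: "L \<in> Lines" and \<sigma>P: "\<sigma> \<in> P" and \<sigma>L: "\<sigma> \<notin> L"
    and feas: "feasible P G (flag_orbit G \<sigma> (P - L))"
begin

lemma finP: "finite P" using lin unfolding linear_space_def by (elim conjE)
lemma LP: "L \<subseteq> P" by (rule lin_sub[OF lin Lline])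
lemma cardL: "card L \<ge> 2" using lin Lline unfolding linear_space_def by (elim conjE) (drule bspec, assumption, elim conjE)

lemma perm: "g \<in> G \<Longrightarrow> g permutes P" by (rule aut_perm[OF aut])
lemma comp: "g \<in> G \<Longrightarrow> h \<in> G \<Longrightarrow> g \<circ> h \<in> G" by (rule aut_comp[OF aut])
lemma invG: "g \<in> G \<Longrightarrow> inv g \<in> G" by (rule aut_inv[OF aut])
lemma idG: "id \<in> G" by (rule aut_id[OF aut])
lemma inv1: "g \<in> G \<Longrightarrow> g (inv g x) = x" by (rule permutes_inverses(1)[OF perm])
lemma inv2: "g \<in> G \<Longrightarrow> inv g (g x) = x" by (rule permutes_inverses(2)[OF perm])
lemma inP: "g \<in> G \<Longrightarrow> g x \<in> P \<longleftrightarrow> x \<in> P" by (rule permutes_in_image[OF perm])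
lemma injG: "g \<in> G \<Longrightarrow> g x = g y \<longleftrightarrow> x = y" using permutes_inj[OF perm] by (auto dest: injD)

lemma tt2: "x \<in> P \<Longrightarrow> y \<in> P \<Longrightarrow> u \<in> P \<Longrightarrow> v \<in> P \<Longrightarrow> x \<noteq> y \<Longrightarrow> u \<noteq> v \<Longrightarrow> \<exists>g\<in>G. g x = u \<and> g y = v"
  by (rule tt[unfolded two_transitive_on_def, rule_format])

lemma other: "x \<in> P \<Longrightarrow> \<exists>z. z \<in> P \<and> z \<noteq> x"
proof -
  assume x: "x \<in> P"
  have c: "card (P - {x}) \<ge> 3" using four finP x by auto
  have "P - {x} \<noteq> {}" using c by (intro notI) simp
  then show ?thesis by blast
qed

lemma trans: "x \<in> P \<Longrightarrow> y \<in> P \<Longrightarrow> \<exists>g\<in>G. g x = y"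
proof -
  assume x: "x \<in> P" and y: "y \<in> P"
  obtain z where z: "z \<in> P" "z \<noteq> x" using other[OF x] by blast
  obtain w where w: "w \<in> P" "w \<noteq> y" using other[OF y] by blast
  have "\<exists>g\<in>G. g x = y \<and> g z = w" using tt2[OF x z(1) y w(1)] z(2) w(2) by auto
  then show ?thesis by blast
qed

lemma feas_trans: "transitive_on (set_stab (point_stab G \<sigma>) (P - L)) (P - L - {\<sigma>})"
proof -
  have m: "(\<sigma>, P - L) \<in> flag_orbit G \<sigma> (P - L)" unfolding flag_orbit_def
    by (rule image_eqI[where x=id]) (simp_all add: idG)
  have "\<forall>(\<tau>, M)\<in>flag_orbit G \<sigma> (P - L). transitive_on (set_stab (point_stab G \<tau>) M) (M - {\<tau>})"
    using feas unfolding feasible_def by (elim conjE)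
  then show ?thesis using m by auto
qed

lemma feas_trans': "x \<in> P - L - {\<sigma>} \<Longrightarrow> y \<in> P - L - {\<sigma>} \<Longrightarrow> \<exists>k\<in>G. k \<sigma> = \<sigma> \<and> k ` L = L \<and> k x = y"
proof -
  assume x: "x \<in> P - L - {\<sigma>}" and y: "y \<in> P - L - {\<sigma>}"
  obtain g where g0: "g \<in> set_stab (point_stab G \<sigma>) (P - L)" "g x = y"
    using feas_trans[unfolded transitive_on_def, rule_format, OF x y] by blast
  then have g: "g \<in> G" "g \<sigma> = \<sigma>" "g ` (P - L) = P - L" unfolding set_stab_def point_stab_def by auto
  then have "g ` L = L" using perm_stab_iff[OF perm[OF g(1)] LP] by simp
  then show ?thesis using g g0(2) by blast
qed

lemma stab_mem: "g \<in> G \<Longrightarrow> g ` L = L \<Longrightarrow> g x \<in> L \<longleftrightarrow> x \<in> L"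
proof -
  assume g: "g \<in> G" "g ` L = L"
  have "g x \<in> g ` L \<longleftrightarrow> x \<in> L" by (rule inj_image_mem_iff[OF permutes_inj[OF perm[OF g(1)]]])
  then show ?thesis using g(2) by simp
qed

lemma inv_stab: "g \<in> G \<Longrightarrow> g ` L = L \<Longrightarrow> inv g ` L = L"
  by (rule inv_image_stab[OF perm])

lemma GL_trans:
  assumes h: "h \<in> G" "h ` L = L" "h \<sigma> \<noteq> \<sigma>" and z: "z \<in> P - L"
  shows "\<exists>g\<in>G. g ` L = L \<and> g \<sigma> = z"
proof (cases "z = \<sigma>")
  case True then show ?thesis using idG by (intro bexI[of _ id]) auto
next
  case False
  have "h \<sigma> \<in> P" using inP[OF h(1)] \<sigma>P by simp
  moreover have "h \<sigma> \<notin> L" using stab_mem[OF h(1,2)] \<sigma>L by simp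
  ultimately have hs: "h \<sigma> \<in> P - L - {\<sigma>}" using h(3) by simp
  have zz: "z \<in> P - L - {\<sigma>}" using z False by simp
  obtain k where k: "k \<in> G" "k \<sigma> = \<sigma>" "k ` L = L" "k (h \<sigma>) = z" using feas_trans'[OF hs zz] by blast
  have "k \<circ> h \<in> G" using comp k h by simp
  moreover have "(k \<circ> h) ` L = L" by (simp only: image_comp[symmetric] k(3) h(2))
  moreover have "(k \<circ> h) \<sigma> = z" using k(4) by simp
  ultimately show ?thesis by blast
qed

lemma part1a:
  assumes h: "h \<in> G" "h ` L = L" "h \<sigma> \<noteq> \<sigma>"
  shows "two_transitive_on (set_stab G L) (P - L)"
  unfolding two_transitive_on_def
proof (intro ballI impI)
  fix x y u w assume x: "x \<in> P - L" and y: "y \<in> P - L" and u: "u \<in> P - L" and w: "w \<in> P - L"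
    and xy: "x \<noteq> y" and uw: "u \<noteq> w"
  obtain a where a: "a \<in> G" "a ` L = L" "a \<sigma> = x" using GL_trans[OF h x] by blast
  obtain c where c: "c \<in> G" "c ` L = L" "c \<sigma> = u" using GL_trans[OF h u] by blast
  have ia: "inv a \<in> G" "inv a ` L = L" using invG[OF a(1)] inv_stab[OF a(1,2)] by auto
  have ic: "inv c \<in> G" "inv c ` L = L" using invG[OF c(1)] inv_stab[OF c(1,2)] by auto
  have ax: "inv a x = \<sigma>" using inv2[OF a(1), of \<sigma>] a(3) by simp
  have cu: "inv c u = \<sigma>" using inv2[OF c(1), of \<sigma>] c(3) by simp
  have "inv a y \<in> P" using inP[OF ia(1)] y by simp
  moreover have "inv a y \<notin> L" using stab_mem[OF ia] y by simp
  moreover have "inv a y \<noteq> \<sigma>" using injG[OF ia(1), of x y] ax xy by simp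
  ultimately have ya: "inv a y \<in> P - L - {\<sigma>}" by simp
  have "inv c w \<in> P" using inP[OF ic(1)] w by simp
  moreover have "inv c w \<notin> L" using stab_mem[OF ic] w by simp
  moreover have "inv c w \<noteq> \<sigma>" using injG[OF ic(1), of u w] cu uw by simp
  ultimately have wc: "inv c w \<in> P - L - {\<sigma>}" by simp
  obtain k where k: "k \<in> G" "k \<sigma> = \<sigma>" "k ` L = L" "k (inv a y) = inv c w" using feas_trans'[OF ya wc] by blast
  define g where "g = c \<circ> k \<circ> inv a"
  have "g \<in> G" unfolding g_def using comp c(1) k(1) ia(1) by simp
  moreover have "g ` L = L" unfolding g_def by (simp only: image_comp[symmetric] c(2) k(3) ia(2))
  moreover have "g x = u" unfolding g_def using ax k(2) c(3) by simp
  moreover have "g y = w" unfolding g_def using k(4) inv1[OF c(1)] by simp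
  ultimately show "\<exists>g\<in>set_stab G L. g x = u \<and> g y = w" unfolding set_stab_def by blast
qed

lemma two_pts: "\<exists>a b. a \<in> L \<and> b \<in> L \<and> a \<noteq> b"
proof -
  have "L \<noteq> {}" using cardL by (intro notI) simp
  then obtain a where a: "a \<in> L" by blast
  have "card (L - {a}) \<ge> 1" using cardL a finite_subset[OF LP finP] by auto
  then have "L - {a} \<noteq> {}" by (intro notI) simp
  then obtain b where "b \<in> L - {a}" by blast
  then show ?thesis using a by blast
qed

lemma lineG: "g \<in> G \<Longrightarrow> g ` L \<in> Lines" by (rule aut_line[OF aut _ Lline])
lemma lineG_sub: "g \<in> G \<Longrightarrow> g ` L \<subseteq> P" by (rule lin_sub[OF lin lineG])

lemma comp_image: "(f \<circ> g) ` A = f ` (g ` A)" by (simp only: image_comp)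

context
  assumes sub: "\<And>g. g \<in> G \<Longrightarrow> g ` L = L \<Longrightarrow> g \<sigma> = \<sigma>"
begin

lemma U:
  assumes g: "g \<in> G" and g': "g' \<in> G" and xy: "x \<noteq> y"
    and "x \<in> g ` L" "y \<in> g ` L" "x \<in> g' ` L" "y \<in> g' ` L"
  shows "g \<sigma> = g' \<sigma>"
proof -
  have e: "g ` L = g' ` L" by (rule line_unique[OF lin lineG[OF g] lineG[OF g'] assms(4-7) xy])
  have q: "inv g \<circ> g' \<in> G" using comp invG g g' by simp
  have "(inv g \<circ> g') ` L = inv g ` (g ` L)" unfolding comp_image e ..
  also have "\<dots> = L" by (rule image_inv_f_f[OF permutes_inj[OF perm[OF g]]])
  finally have "(inv g \<circ> g') \<sigma> = \<sigma>" using sub[OF q] by blast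
  then have "g (inv g (g' \<sigma>)) = g \<sigma>" by simp
  then show ?thesis using inv1[OF g] by simp
qed

definition DD where "DD = Sigma P (\<lambda>x. P - {x})"
definition FF where "FF \<tau> = {p \<in> DD. \<exists>g\<in>G. g \<sigma> = \<tau> \<and> fst p \<in> g ` L \<and> snd p \<in> g ` L}"

lemma finDD: "finite DD" unfolding DD_def using finP by auto
lemma finFF: "finite (FF \<tau>)" unfolding FF_def using finDD by auto

lemma DD_card: "card DD = card P * (card P - 1)"
proof -
  have "card DD = (\<Sum>x\<in>P. card (P - {x}))" unfolding DD_def using finP by simp
  also have "\<dots> = (\<Sum>x\<in>P. card P - 1)" using finP by (intro sum.cong) auto
  also have "\<dots> = card P * (card P - 1)" by simp
  finally show ?thesis .
qed

lemma DD_cover: "DD = (\<Union>\<tau>\<in>P. FF \<tau>)"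
proof
  show "(\<Union>\<tau>\<in>P. FF \<tau>) \<subseteq> DD" unfolding FF_def by auto
  show "DD \<subseteq> (\<Union>\<tau>\<in>P. FF \<tau>)"
  proof
    fix p assume p: "p \<in> DD"
    obtain x y where xy: "p = (x, y)" "x \<in> P" "y \<in> P" "x \<noteq> y" using p unfolding DD_def by auto
    obtain a b where ab: "a \<in> L" "b \<in> L" "a \<noteq> b" using two_pts by blast
    obtain g where g: "g \<in> G" "g a = x" "g b = y" using tt2[OF _ _ xy(2,3) ab(3) xy(4)] ab LP by blast
    have "g \<sigma> \<in> P" using inP[OF g(1)] \<sigma>P by simp
    moreover have "p \<in> FF (g \<sigma>)" unfolding FF_def using p xy g ab by auto
    ultimately show "p \<in> (\<Union>\<tau>\<in>P. FF \<tau>)" by blast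
  qed
qed

lemma FF_disj: "\<tau> \<noteq> \<tau>' \<Longrightarrow> FF \<tau> \<inter> FF \<tau>' = {}"
proof (rule ccontr)
  assume ne: "\<tau> \<noteq> \<tau>'" and "FF \<tau> \<inter> FF \<tau>' \<noteq> {}"
  then obtain p where p: "p \<in> FF \<tau>" "p \<in> FF \<tau>'" by blast
  obtain g where g: "g \<in> G" "g \<sigma> = \<tau>" "fst p \<in> g ` L" "snd p \<in> g ` L" using p(1) unfolding FF_def by blast
  obtain g' where g': "g' \<in> G" "g' \<sigma> = \<tau>'" "fst p \<in> g' ` L" "snd p \<in> g' ` L" using p(2) unfolding FF_def by blast
  have "fst p \<noteq> snd p" using p(1) unfolding FF_def DD_def by auto
  then have "g \<sigma> = g' \<sigma>" using U[OF g(1) g'(1)] g g' by blast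
  then show False using ne g(2) g'(2) by simp
qed

lemma FF_eq:
  assumes c: "c \<in> G"
  shows "FF (c \<sigma>) = (\<lambda>p. (c (fst p), c (snd p))) ` FF \<sigma>"
proof
  show "(\<lambda>p. (c (fst p), c (snd p))) ` FF \<sigma> \<subseteq> FF (c \<sigma>)"
  proof
    fix q assume "q \<in> (\<lambda>p. (c (fst p), c (snd p))) ` FF \<sigma>"
    then obtain p where q: "q = (c (fst p), c (snd p))" and p: "p \<in> FF \<sigma>" by blast
    obtain g where g: "g \<in> G" "g \<sigma> = \<sigma>" "fst p \<in> g ` L" "snd p \<in> g ` L" using p unfolding FF_def by blast
    have pD: "fst p \<in> P" "snd p \<in> P" "fst p \<noteq> snd p" using p unfolding FF_def DD_def by auto
    have "q \<in> DD" unfolding DD_def q using pD inP[OF c] injG[OF c] by simp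
    moreover have "c \<circ> g \<in> G" using comp c g(1) by simp
    moreover have "(c \<circ> g) \<sigma> = c \<sigma>" using g(2) by simp
    moreover have "fst q \<in> (c \<circ> g) ` L" "snd q \<in> (c \<circ> g) ` L" unfolding q comp_image using g(3,4) by auto
    ultimately show "q \<in> FF (c \<sigma>)" unfolding FF_def by blast
  qed
  show "FF (c \<sigma>) \<subseteq> (\<lambda>p. (c (fst p), c (snd p))) ` FF \<sigma>"
  proof
    fix q assume q: "q \<in> FF (c \<sigma>)"
    obtain g where g: "g \<in> G" "g \<sigma> = c \<sigma>" "fst q \<in> g ` L" "snd q \<in> g ` L" using q unfolding FF_def by blast
    have qD: "fst q \<in> P" "snd q \<in> P" "fst q \<noteq> snd q" using q unfolding FF_def DD_def by auto
    have ic: "inv c \<in> G" using invG[OF c] .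
    define p where "p = (inv c (fst q), inv c (snd q))"
    have "p \<in> DD" unfolding DD_def p_def using qD inP[OF ic] injG[OF ic] by simp
    moreover have "inv c \<circ> g \<in> G" using comp ic g(1) by simp
    moreover have "(inv c \<circ> g) \<sigma> = \<sigma>" using g(2) inv2[OF c] by simp
    moreover have "fst p \<in> (inv c \<circ> g) ` L" "snd p \<in> (inv c \<circ> g) ` L" unfolding p_def comp_image using g(3,4) by auto
    ultimately have "p \<in> FF \<sigma>" unfolding FF_def by blast
    moreover have "q = (c (fst p), c (snd p))" unfolding p_def using inv1[OF c] by (cases q) simp
    ultimately show "q \<in> (\<lambda>p. (c (fst p), c (snd p))) ` FF \<sigma>" by blast
  qed
qed

lemma FF_card: "\<tau> \<in> P \<Longrightarrow> card (FF \<tau>) = card (FF \<sigma>)"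
proof -
  assume t: "\<tau> \<in> P"
  obtain c where c: "c \<in> G" "c \<sigma> = \<tau>" using trans[OF \<sigma>P t] by blast
  have "inj_on (\<lambda>p. (c (fst p), c (snd p))) (FF \<sigma>)"
    by (rule inj_onI) (auto simp: injG[OF c(1)] prod_eq_iff)
  then show ?thesis using FF_eq[OF c(1)] c(2) card_image by metis
qed

definition LL where "LL = (\<lambda>g. g ` L) ` {g\<in>G. g \<sigma> = \<sigma>}"

lemma FF_sigma: "FF \<sigma> = (\<Union>l\<in>LL. Sigma l (\<lambda>x. l - {x}))"
proof
  show "FF \<sigma> \<subseteq> (\<Union>l\<in>LL. Sigma l (\<lambda>x. l - {x}))"
  proof
    fix p assume p: "p \<in> FF \<sigma>"
    obtain g where g: "g \<in> G" "g \<sigma> = \<sigma>" "fst p \<in> g ` L" "snd p \<in> g ` L" using p unfolding FF_def by blast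
    have "fst p \<noteq> snd p" using p unfolding FF_def DD_def by auto
    then have "p \<in> Sigma (g ` L) (\<lambda>x. g ` L - {x})" using g(3,4) by (cases p) auto
    moreover have "g ` L \<in> LL" unfolding LL_def using g(1,2) by blast
    ultimately show "p \<in> (\<Union>l\<in>LL. Sigma l (\<lambda>x. l - {x}))" by blast
  qed
  show "(\<Union>l\<in>LL. Sigma l (\<lambda>x. l - {x})) \<subseteq> FF \<sigma>"
  proof
    fix p assume "p \<in> (\<Union>l\<in>LL. Sigma l (\<lambda>x. l - {x}))"
    then obtain g where g: "g \<in> G" "g \<sigma> = \<sigma>" and p: "p \<in> Sigma (g ` L) (\<lambda>x. g ` L - {x})"
      unfolding LL_def by blast
    have "p \<in> DD" using p lineG_sub[OF g(1)] unfolding DD_def by auto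
    then show "p \<in> FF \<sigma>" unfolding FF_def using g p by auto
  qed
qed

lemma finLL: "finite LL"
proof -
  have "LL \<subseteq> Pow P" unfolding LL_def using lineG_sub by blast
  then show ?thesis using finP finite_subset by blast
qed

lemma FF_sigma_card: "card (FF \<sigma>) = card LL * (card L * (card L - 1))"
proof -
  have finL: "finite L" using finite_subset[OF LP finP] .
  have "card (FF \<sigma>) = (\<Sum>l\<in>LL. card (Sigma l (\<lambda>x. l - {x})))"
    unfolding FF_sigma
  proof (rule card_UN_disjoint[OF finLL])
    show "\<forall>l\<in>LL. finite (Sigma l (\<lambda>x. l - {x}))" unfolding LL_def using finL by auto
    show "\<forall>l\<in>LL. \<forall>l'\<in>LL. l \<noteq> l' \<longrightarrow> Sigma l (\<lambda>x. l - {x}) \<inter> Sigma l' (\<lambda>x. l' - {x}) = {}"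
    proof (intro ballI impI)
      fix l l' assume l: "l \<in> LL" and l': "l' \<in> LL" and ne: "l \<noteq> l'"
      have ll: "l \<in> Lines" "l' \<in> Lines" using l l' lineG unfolding LL_def by auto
      show "Sigma l (\<lambda>x. l - {x}) \<inter> Sigma l' (\<lambda>x. l' - {x}) = {}"
      proof (rule ccontr)
        assume "Sigma l (\<lambda>x. l - {x}) \<inter> Sigma l' (\<lambda>x. l' - {x}) \<noteq> {}"
        then obtain x y where "x \<in> l" "y \<in> l" "x \<in> l'" "y \<in> l'" "x \<noteq> y" by blast
        then have "l = l'" using line_unique[OF lin ll] by blast
        then show False using ne by simp
      qed
    qed
  qed
  also have "\<dots> = (\<Sum>l\<in>LL. card L * (card L - 1))"
  proof (rule sum.cong[OF refl])
    fix l assume "l \<in> LL"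
    then obtain g where g: "g \<in> G" "l = g ` L" unfolding LL_def by blast
    have cl: "card l = card L" unfolding g(2) by (rule card_image[OF inj_on_subset[OF permutes_inj[OF perm[OF g(1)]]]]) simp
    have fl: "finite l" unfolding g(2) using finL by simp
    have "card (Sigma l (\<lambda>x. l - {x})) = (\<Sum>x\<in>l. card (l - {x}))" using fl by simp
    also have "\<dots> = (\<Sum>x\<in>l. card l - 1)" using fl by (intro sum.cong) auto
    also have "\<dots> = card l * (card l - 1)" by simp
    finally show "card (Sigma l (\<lambda>x. l - {x})) = card L * (card L - 1)" using cl by simp
  qed
  also have "\<dots> = card LL * (card L * (card L - 1))" by simp
  finally show ?thesis .
qed

lemma part1b: "card L * (card L - 1) dvd card P - 1"
proof -
  have "card DD = (\<Sum>\<tau>\<in>P. card (FF \<tau>))"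
    unfolding DD_cover
    by (rule card_UN_disjoint[OF finP]) (auto simp: finFF FF_disj)
  also have "\<dots> = (\<Sum>\<tau>\<in>P. card (FF \<sigma>))" by (rule sum.cong[OF refl]) (rule FF_card)
  also have "\<dots> = card P * card (FF \<sigma>)" by simp
  finally have "card P * (card P - 1) = card P * card (FF \<sigma>)" using DD_card by simp
  moreover have "card P > 0" using four by simp
  ultimately have "card P - 1 = card (FF \<sigma>)" by simp
  then show ?thesis using FF_sigma_card by simp
qed

end

context
  fixes \<alpha> \<beta> assumes Lab: "L = {\<alpha>, \<beta>}"
begin

lemma ab: "\<alpha> \<noteq> \<beta>"
proof
  assume "\<alpha> = \<beta>" then have "card L = 1" using Lab by simp
  then show False using cardL by simp
qed

lemma cardL2: "card L = 2" using Lab ab by simp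

lemma Nmem: "n \<in> point_stab (point_stab G \<alpha>) \<beta> \<longleftrightarrow> n \<in> G \<and> n \<alpha> = \<alpha> \<and> n \<beta> = \<beta>"
  unfolding point_stab_def by auto

lemma stabL_ab: "k \<in> G \<Longrightarrow> k ` L = L \<Longrightarrow> (k \<alpha> = \<alpha> \<and> k \<beta> = \<beta>) \<or> (k \<alpha> = \<beta> \<and> k \<beta> = \<alpha>)"
proof -
  assume k: "k \<in> G" "k ` L = L"
  have "k \<alpha> \<in> L" "k \<beta> \<in> L" using k(2) Lab by auto
  moreover have "k \<alpha> \<noteq> k \<beta>" using injG[OF k(1)] ab by simp
  ultimately show ?thesis using Lab by auto
qed

lemma N_stab: "n \<in> point_stab (point_stab G \<alpha>) \<beta> \<Longrightarrow> n ` L = L"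
  unfolding Nmem using Lab by auto

lemma conjN:
  assumes n: "n \<in> point_stab (point_stab G \<alpha>) \<beta>" and c: "c \<in> G" "c ` L = L"
  shows "inv c \<circ> n \<circ> c \<in> point_stab (point_stab G \<alpha>) \<beta>"
proof -
  have n': "n \<in> G" "n \<alpha> = \<alpha>" "n \<beta> = \<beta>" using n Nmem by auto
  have "inv c \<circ> n \<circ> c \<in> G" using comp invG c n' by simp
  moreover have "n (c \<alpha>) = c \<alpha>" "n (c \<beta>) = c \<beta>" using stabL_ab[OF c] n' by auto
  then have "(inv c \<circ> n \<circ> c) \<alpha> = \<alpha>" "(inv c \<circ> n \<circ> c) \<beta> = \<beta>"
    using inv2[OF c(1)] by auto
  ultimately show ?thesis using Nmem by blast
qed

lemma conjN':
  assumes n: "n \<in> point_stab (point_stab G \<alpha>) \<beta>" and c: "c \<in> G" "c ` L = L"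
  shows "c \<circ> n \<circ> inv c \<in> point_stab (point_stab G \<alpha>) \<beta>"
proof -
  have "inv (inv c) \<circ> n \<circ> inv c \<in> point_stab (point_stab G \<alpha>) \<beta>"
    by (rule conjN[OF n invG[OF c(1)] inv_stab[OF c]])
  moreover have "inv (inv c) = c" by (rule inv_inv_eq[OF permutes_bij[OF perm[OF c(1)]]])
  ultimately show ?thesis by simp
qed

lemma part2_case2:
  assumes sub: "\<And>g. g \<in> G \<Longrightarrow> g ` L = L \<Longrightarrow> g \<sigma> = \<sigma>"
  shows "odd (card P) \<and> point_stab (point_stab G \<alpha>) \<beta> \<subseteq> point_stab G \<sigma> \<and>
             half_transitive_on (point_stab (point_stab G \<alpha>) \<beta>) (P - {\<alpha>, \<beta>, \<sigma>})"
proof (intro conjI)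
  have "card L * (card L - 1) dvd card P - 1" by (rule part1b) (rule sub)
  then have "2 dvd card P - 1" using cardL2 by simp
  then show "odd (card P)" using four by presburger
  show "point_stab (point_stab G \<alpha>) \<beta> \<subseteq> point_stab G \<sigma>"
  proof
    fix n assume n: "n \<in> point_stab (point_stab G \<alpha>) \<beta>"
    then have "n \<in> G" using Nmem by blast
    then show "n \<in> point_stab G \<sigma>" using sub N_stab[OF n] unfolding point_stab_def by blast
  qed
  show "half_transitive_on (point_stab (point_stab G \<alpha>) \<beta>) (P - {\<alpha>, \<beta>, \<sigma>})"
    unfolding half_transitive_on_def
  proof (intro ballI)
    fix x y assume x: "x \<in> P - {\<alpha>, \<beta>, \<sigma>}" and y: "y \<in> P - {\<alpha>, \<beta>, \<sigma>}"
    let ?N = "point_stab (point_stab G \<alpha>) \<beta>"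
    have x': "x \<in> P - L - {\<sigma>}" and y': "y \<in> P - L - {\<sigma>}" using x y Lab by auto
    obtain k where k: "k \<in> G" "k \<sigma> = \<sigma>" "k ` L = L" "k x = y" using feas_trans'[OF x' y'] by blast
    have "orbit_of ?N y = k ` orbit_of ?N x"
    proof
      show "orbit_of ?N y \<subseteq> k ` orbit_of ?N x"
      proof
        fix z assume "z \<in> orbit_of ?N y"
        then obtain n where n: "n \<in> ?N" "z = n y" unfolding orbit_of_def by blast
        have m: "inv k \<circ> n \<circ> k \<in> ?N" by (rule conjN[OF n(1) k(1,3)])
        have "z = k ((inv k \<circ> n \<circ> k) x)" using n(2) k(4) inv1[OF k(1)] by simp
        then show "z \<in> k ` orbit_of ?N x" using m unfolding orbit_of_def by blast
      qed
      show "k ` orbit_of ?N x \<subseteq> orbit_of ?N y"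
      proof
        fix z assume "z \<in> k ` orbit_of ?N x"
        then obtain n where n: "n \<in> ?N" "z = k (n x)" unfolding orbit_of_def by blast
        have m: "k \<circ> n \<circ> inv k \<in> ?N" by (rule conjN'[OF n(1) k(1,3)])
        have "z = (k \<circ> n \<circ> inv k) y" using n(2) k(4) inv2[OF k(1)] by (metis comp_apply)
        then show "z \<in> orbit_of ?N y" using m unfolding orbit_of_def by blast
      qed
    qed
    moreover have "inj_on k (orbit_of ?N x)" using permutes_inj[OF perm[OF k(1)]] by (rule inj_on_subset) simp
    ultimately show "card (orbit_of ?N x) = card (orbit_of ?N y)" by (simp add: card_image)
  qed
qed

lemma part2_case1:
  assumes t2: "two_transitive_on (set_stab G L) (P - L)"
    and nt: "\<not> transitive_on (point_stab (point_stab G \<alpha>) \<beta>) (P - {\<alpha>, \<beta>})"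
  shows "card P = 4 \<and> G = {p. p permutes P \<and> evenperm p}"
proof -
  let ?N = "point_stab (point_stab G \<alpha>) \<beta>"
  have S: "P - {\<alpha>, \<beta>} = P - L" using Lab by simp
  have t2': "\<exists>g\<in>G. g ` L = L \<and> g x = u \<and> g y = v"
    if a: "x \<in> P - L" "y \<in> P - L" "u \<in> P - L" "v \<in> P - L" "x \<noteq> y" "u \<noteq> v" for x y u v
  proof -
    obtain g where "g \<in> set_stab G L" "g x = u" "g y = v"
      using t2[unfolded two_transitive_on_def, rule_format, OF a] by blast
    then show ?thesis unfolding set_stab_def by blast
  qed
  have fixS: "n x = x" if n: "n \<in> ?N" and x: "x \<in> P - L" for n x
  proof (rule ccontr)
    assume nx: "n x \<noteq> x"
    have n': "n \<in> G" using n Nmem by blast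
    have nxS: "n x \<in> P - L" using inP[OF n'] stab_mem[OF n' N_stab[OF n]] x by simp
    have "transitive_on ?N (P - {\<alpha>, \<beta>})" unfolding transitive_on_def S
    proof (intro ballI)
      fix y z assume y: "y \<in> P - L" and z: "z \<in> P - L"
      show "\<exists>g\<in>?N. g y = z"
      proof (cases "y = z")
        case True
        have "id \<in> ?N" using Nmem idG by simp
        then show ?thesis using True by (intro bexI[of _ id]) simp_all
      next
        case False
        obtain g where g: "g \<in> G" "g ` L = L" "g x = y" "g (n x) = z" using t2'[OF x nxS y z nx[symmetric] False] by blast
        have m: "g \<circ> n \<circ> inv g \<in> ?N" by (rule conjN'[OF n g(1,2)])
        have "inv g y = x" using g(3) inv2[OF g(1)] by metis
        then have "(g \<circ> n \<circ> inv g) y = z" using g(4) by simp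
        then show ?thesis using m by blast
      qed
    qed
    then show False using nt by simp
  qed
  have Nid: "n = id" if n: "n \<in> ?N" for n
  proof
    fix w
    have n': "n \<in> G" "n \<alpha> = \<alpha>" "n \<beta> = \<beta>" using n Nmem by auto
    show "n w = id w"
    proof (cases "w \<in> P - L")
      case True then show ?thesis using fixS[OF n] by simp
    next
      case False
      then have "w \<in> L \<or> w \<notin> P" by blast
      then show ?thesis using n' Lab permutes_not_in[OF perm[OF n'(1)]] by auto
    qed
  qed
  have fixa: "g = id" if g: "g \<in> G" "g ` L = L" "g \<alpha> = \<alpha>" for g
  proof -
    have "g \<beta> = \<beta>" using stabL_ab[OF g(1,2)] g(3) ab by auto
    then show ?thesis using Nid Nmem g by blast
  qed
  have finS: "finite (P - L)" using finP by simp
  have cS: "card (P - L) = card P - 2" using card_Diff_subset[OF finite_subset[OF LP finP] LP] cardL2 by simp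
  have "\<not> card (P - L) \<ge> 3"
  proof
    assume "card (P - L) \<ge> 3"
    then obtain x y z where xyz: "x \<in> P - L" "y \<in> P - L" "z \<in> P - L" "x \<noteq> y" "x \<noteq> z" "y \<noteq> z"
      using three_in[OF finS] by blast
    obtain g1 where g1: "g1 \<in> G" "g1 ` L = L" "g1 x = x" "g1 y = z" using t2'[OF xyz(1,2,1,3,4,5)] by blast
    obtain g2 where g2: "g2 \<in> G" "g2 ` L = L" "g2 x = y" "g2 y = x" using t2'[OF xyz(1,2,2,1,4) xyz(4)[symmetric]] by blast
    have "g1 \<alpha> \<noteq> \<alpha>"
    proof
      assume "g1 \<alpha> = \<alpha>" then have "g1 = id" using fixa g1(1,2) by blast
      then show False using g1(4) xyz(6) by simp
    qed
    then have s1: "g1 \<alpha> = \<beta>" "g1 \<beta> = \<alpha>" using stabL_ab[OF g1(1,2)] by auto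
    have "g2 \<alpha> \<noteq> \<alpha>"
    proof
      assume "g2 \<alpha> = \<alpha>" then have "g2 = id" using fixa g2(1,2) by blast
      then show False using g2(3) xyz(4) by simp
    qed
    then have s2: "g2 \<alpha> = \<beta>" "g2 \<beta> = \<alpha>" using stabL_ab[OF g2(1,2)] by auto
    have "g1 \<circ> g2 \<in> ?N" unfolding Nmem using comp[OF g1(1) g2(1)] s1 s2 by simp
    then have "g1 \<circ> g2 = id" by (rule Nid)
    then have "g1 (g2 x) = x" by (metis comp_apply id_apply)
    then show False using g1(4) g2(3) xyz(5) by simp
  qed
  then have c4: "card P = 4" using cS four by linarith
  have aP: "\<alpha> \<in> P" "\<beta> \<in> P" using LP Lab by auto
  have sharp: "g = id" if g: "g \<in> G" "x \<in> P" "y \<in> P" "x \<noteq> y" "g x = x" "g y = y" for g x y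
  proof -
    obtain c where c: "c \<in> G" "c \<alpha> = x" "c \<beta> = y" using tt2[OF aP g(2,3) ab g(4)] by blast
    have mG: "inv c \<circ> g \<circ> c \<in> G" using comp invG c(1) g(1) by simp
    have "(inv c \<circ> g \<circ> c) \<alpha> = \<alpha>" "(inv c \<circ> g \<circ> c) \<beta> = \<beta>" using c g(5,6) inv2[OF c(1)] by auto
    then have m: "inv c \<circ> g \<circ> c = id" using Nid Nmem mG by blast
    show ?thesis
    proof
      fix w
      have "inv c (g (c (inv c w))) = inv c w" using m by (metis comp_apply id_apply)
      then have "inv c (g w) = inv c w" using inv1[OF c(1)] by simp
      then have "c (inv c (g w)) = c (inv c w)" by simp
      then show "g w = id w" using inv1[OF c(1)] by simp
    qed
  qed
  have "G = {p. p permutes P \<and> evenperm p}"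
  proof (rule A4[OF finP c4])
    show "\<And>g. g \<in> G \<Longrightarrow> g permutes P" by (rule perm)
    show "\<And>g h. g \<in> G \<Longrightarrow> h \<in> G \<Longrightarrow> g \<circ> h \<in> G" by (rule comp)
    show "\<And>g. g \<in> G \<Longrightarrow> inv g \<in> G" by (rule invG)
    show "\<And>x y u v. x \<in> P \<Longrightarrow> y \<in> P \<Longrightarrow> u \<in> P \<Longrightarrow> v \<in> P \<Longrightarrow> x \<noteq> y \<Longrightarrow> u \<noteq> v \<Longrightarrow> \<exists>g\<in>G. g x = u \<and> g y = v"
      by (rule tt2)
    show "\<And>g x y. g \<in> G \<Longrightarrow> x \<in> P \<Longrightarrow> y \<in> P \<Longrightarrow> x \<noteq> y \<Longrightarrow> g x = x \<Longrightarrow> g y = y \<Longrightarrow> g = id"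
      by (rule sharp)
  qed
  then show ?thesis using c4 by simp
qed

end

end

theorem lemma3p2:
  fixes P :: "'a set" and Lines :: "'a set set" and G :: "('a \<Rightarrow> 'a) set"
    and \<sigma> :: 'a and L :: "'a set"
  assumes lin: "linear_space P Lines"
    and aut: "aut_group P Lines G"
    and tt: "two_transitive_on G P"
    and four: "card P \<ge> 4"
    and Lline: "L \<in> Lines" and \<sigma>P: "\<sigma> \<in> P" and \<sigma>L: "\<sigma> \<notin> L"
    and feas: "feasible P G (flag_orbit G \<sigma> (P - L))"
  shows "(two_transitive_on (set_stab G L) (P - L) \<or>
          (set_stab G L \<subseteq> point_stab G \<sigma> \<and> card L * (card L - 1) dvd card P - 1))
       \<and> (\<forall>\<alpha> \<beta>. L = {\<alpha>, \<beta>} \<longrightarrow>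
            (card P = 4 \<and> G = {p. p permutes P \<and> evenperm p})
          \<or> transitive_on (point_stab (point_stab G \<alpha>) \<beta>) (P - {\<alpha>, \<beta>})
          \<or> (odd (card P) \<and> point_stab (point_stab G \<alpha>) \<beta> \<subseteq> point_stab G \<sigma> \<and>
             half_transitive_on (point_stab (point_stab G \<alpha>) \<beta>) (P - {\<alpha>, \<beta>, \<sigma>})))"
proof -
  interpret c: ctx P Lines G \<sigma> L by (rule ctx.intro[OF lin aut tt four Lline \<sigma>P \<sigma>L feas])
  have p1: "two_transitive_on (set_stab G L) (P - L) \<or>
          (set_stab G L \<subseteq> point_stab G \<sigma> \<and> card L * (card L - 1) dvd card P - 1)"
  proof (cases "\<exists>h\<in>G. h ` L = L \<and> h \<sigma> \<noteq> \<sigma>")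
    case True
    then obtain h where "h \<in> G" "h ` L = L" "h \<sigma> \<noteq> \<sigma>" by blast
    then show ?thesis using c.part1a by blast
  next
    case False
    then have sub: "\<And>g. g \<in> G \<Longrightarrow> g ` L = L \<Longrightarrow> g \<sigma> = \<sigma>" by blast
    have "set_stab G L \<subseteq> point_stab G \<sigma>" unfolding set_stab_def point_stab_def using sub by blast
    moreover have "card L * (card L - 1) dvd card P - 1" by (rule c.part1b) (rule sub)
    ultimately show ?thesis by blast
  qed
  have p2: "\<forall>\<alpha> \<beta>. L = {\<alpha>, \<beta>} \<longrightarrow>
            (card P = 4 \<and> G = {p. p permutes P \<and> evenperm p})
          \<or> transitive_on (point_stab (point_stab G \<alpha>) \<beta>) (P - {\<alpha>, \<beta>})
          \<or> (odd (card P) \<and> point_stab (point_stab G \<alpha>) \<beta> \<subseteq> point_stab G \<sigma> \<and>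
             half_transitive_on (point_stab (point_stab G \<alpha>) \<beta>) (P - {\<alpha>, \<beta>, \<sigma>}))"
  proof (intro allI impI)
    fix \<alpha> \<beta> assume Lab: "L = {\<alpha>, \<beta>}"
    show "(card P = 4 \<and> G = {p. p permutes P \<and> evenperm p})
          \<or> transitive_on (point_stab (point_stab G \<alpha>) \<beta>) (P - {\<alpha>, \<beta>})
          \<or> (odd (card P) \<and> point_stab (point_stab G \<alpha>) \<beta> \<subseteq> point_stab G \<sigma> \<and>
             half_transitive_on (point_stab (point_stab G \<alpha>) \<beta>) (P - {\<alpha>, \<beta>, \<sigma>}))"
      using p1
    proof
      assume t2: "two_transitive_on (set_stab G L) (P - L)"
      show ?thesis
      proof (cases "transitive_on (point_stab (point_stab G \<alpha>) \<beta>) (P - {\<alpha>, \<beta>})")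
        case True then show ?thesis by blast
      next
        case False then show ?thesis using c.part2_case1[OF Lab t2] by blast
      qed
    next
      assume "set_stab G L \<subseteq> point_stab G \<sigma> \<and> card L * (card L - 1) dvd card P - 1"
      then have sub: "\<And>g. g \<in> G \<Longrightarrow> g ` L = L \<Longrightarrow> g \<sigma> = \<sigma>" unfolding set_stab_def point_stab_def by blast
      have "odd (card P) \<and> point_stab (point_stab G \<alpha>) \<beta> \<subseteq> point_stab G \<sigma> \<and>
             half_transitive_on (point_stab (point_stab G \<alpha>) \<beta>) (P - {\<alpha>, \<beta>, \<sigma>})"
        by (rule c.part2_case2[OF Lab]) (rule sub)
      then show ?thesis by blast
    qed
  qed
  show ?thesis using p1 p2 by blast
qed

end
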